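(* Let $q \geq 1$ and let $k$ be a positive integer with $k < n$. Let $\boldsymbol{B}$ be a dictionary as described in the context, and assume that every signal $\boldsymbol{y}\in\mathbb{R}^D$ that admits a $k$-block-sparse representation admits a unique one. If $$\zeta_k + \zeta_{k-1} < \frac{1-\epsilon'_q}{1+\epsilon'_q},$$ then for every $\Lambda_k\subseteq\{1,\dots,n\}$ with $|\Lambda_k|=k$ and every $\boldsymbol{y}\in\bigoplus_{i\in\Lambda_k}\mathcal{S}_i$, every optimal solution $\boldsymbol{c}^*$ of $P'_{\ell_q/\ell_1}(\boldsymbol{y})$ satisfies $\boldsymbol{B}[i]\boldsymbol{c}^*[i]=\boldsymbol{0}$ for all $i\notin\Lambda_k$; i.e. the solution of $P'_{\ell_q/\ell_1}$ is equivalent to that of $P'_{\ell_q/\ell_0}$.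
   Context: $\boldsymbol{B} = [\boldsymbol{B}[1]\ \cdots\ \boldsymbol{B}[n]] \in \mathbb{R}^{D\times N}$ has unit-Euclidean-norm columns, blocks $\boldsymbol{B}[i] \in \mathbb{R}^{D\times m_i}$ (possibly with linearly dependent columns); $\mathcal{S}_i = \operatorname{span}(\boldsymbol{B}[i])$, and $\mathcal{S}_i\cap\mathcal{S}_j = \{0\}$ for $i\ne j$. Vectors $\boldsymbol{c}\in\mathbb{R}^N$ are written $(\boldsymbol{c}[1];\dots;\boldsymbol{c}[n])$, $\boldsymbol{c}[i]\in\mathbb{R}^{m_i}$. A $k$-block-sparse representation of $\boldsymbol{y}$ is $\boldsymbol{y}=\sum_{i\in\Lambda}\boldsymbol{s}_i$ with $|\Lambda|\le k$, $\boldsymbol{s}_i\in\mathcal{S}_i\setminus\{0\}$; uniqueness means any two have the same $\Lambda$ and the same $\boldsymbol{s}_i$. $P'_{\ell_q/\ell_1}(\boldsymbol{y})$: $\min\sum_i\|\boldsymbol{B}[i]\boldsymbol{c}[i]\|_q$ s.t. $\boldsymbol{y}=\boldsymbol{B}\boldsymbol{c}$; $P'_{\ell_q/\ell_0}(\boldsymbol{y})$: minimize $\#\{i:\boldsymbol{B}[i]\boldsymbol{c}[i]\ne 0\}$ s.t. $\boldsymbol{y}=\boldsymbol{B}\boldsymbol{c}$. Subspace coherence: $\mu(\mathcal{S}_i,\mathcal{S}_j)=\max_{0\ne\boldsymbol{x}\in\mathcal{S}_i,\,0\ne\boldsymbol{z}\in\mathcal{S}_j}\frac{|\boldsymbol{x}^\top\boldsymbol{z}|}{\|\boldsymbol{x}\|_2\|\boldsymbol{z}\|_2}$.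 $\zeta_k=\max_{\Lambda_k}\max_{i\notin\Lambda_k}\sum_{j\in\Lambda_k}\mu(\mathcal{S}_i,\mathcal{S}_j)$ over all $k$-element subsets $\Lambda_k\subseteq\{1,\dots,n\}$, with $\zeta_0=0$. $\epsilon'_q$: the smallest constant such that $(1-\epsilon'_q)\|\boldsymbol{B}[i]\boldsymbol{c}[i]\|_q^2\le\|\boldsymbol{B}[i]\boldsymbol{c}[i]\|_2^2\le(1+\epsilon'_q)\|\boldsymbol{B}[i]\boldsymbol{c}[i]\|_q^2$ for all $i$ and all $\boldsymbol{c}[i]$. *)

theory Defs
  imports "HOL-Analysis.Analysis"
begin

text \<open>A block dictionary: n blocks, block i has m i columns b i 0, ..., b i (m i - 1)
  in R^D (modelled as real^'d).  Coefficients are c :: nat => nat => real,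
  c i j being the j-th entry of c[i].\<close>

definition blockvec :: "(nat \<Rightarrow> nat \<Rightarrow> real^'d) \<Rightarrow> (nat \<Rightarrow> nat) \<Rightarrow> nat \<Rightarrow> (nat \<Rightarrow> real) \<Rightarrow> real^'d" where
  "blockvec b m i ci = (\<Sum>j<m i. ci j *\<^sub>R b i j)"

definition subsp :: "(nat \<Rightarrow> nat \<Rightarrow> real^'d) \<Rightarrow> (nat \<Rightarrow> nat) \<Rightarrow> nat \<Rightarrow> (real^'d) set" where
  "subsp b m i = span (b i ` {..<m i})"

definition lq_norm :: "real \<Rightarrow> real^'d \<Rightarrow> real" where
  "lq_norm q x = (\<Sum>k\<in>UNIV. \<bar>x $ k\<bar> powr q) powr (1 / q)"

definition dict_synth :: "(nat \<Rightarrow> nat \<Rightarrow> real^'d) \<Rightarrow> (nat \<Rightarrow> nat) \<Rightarrow> nat \<Rightarrow> (nat \<Rightarrow> nat \<Rightarrow> real) \<Rightarrow> real^'d" where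
  "dict_synth b m n c = (\<Sum>i<n. blockvec b m i (c i))"

text \<open>Subspace coherence (maximum of |x.z|/(|x||z|); attained, and the value 0 is
  included only so that the Sup is well defined).\<close>
definition sub_coh :: "(real^'d) set \<Rightarrow> (real^'d) set \<Rightarrow> real" where
  "sub_coh S T = Sup ({\<bar>x \<bullet> z\<bar> / (norm x * norm z) | x z. x \<in> S \<and> x \<noteq> 0 \<and> z \<in> T \<and> z \<noteq> 0} \<union> {0})"

definition zeta :: "(nat \<Rightarrow> nat \<Rightarrow> real^'d) \<Rightarrow> (nat \<Rightarrow> nat) \<Rightarrow> nat \<Rightarrow> nat \<Rightarrow> real" where
  "zeta b m n k = (if k = 0 then 0 else
     Max {(\<Sum>j\<in>L. sub_coh (subsp b m i) (subsp b m j)) | L i.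
            L \<subseteq> {..<n} \<and> card L = k \<and> i < n \<and> i \<notin> L})"

definition eps_q :: "(nat \<Rightarrow> nat \<Rightarrow> real^'d) \<Rightarrow> (nat \<Rightarrow> nat) \<Rightarrow> nat \<Rightarrow> real \<Rightarrow> real" where
  "eps_q b m n q = Inf {e. \<forall>i<n. \<forall>ci.
      (1 - e) * (lq_norm q (blockvec b m i ci))\<^sup>2 \<le> (norm (blockvec b m i ci))\<^sup>2 \<and>
      (norm (blockvec b m i ci))\<^sup>2 \<le> (1 + e) * (lq_norm q (blockvec b m i ci))\<^sup>2}"

definition ksparse_rep :: "(nat \<Rightarrow> nat \<Rightarrow> real^'d) \<Rightarrow> (nat \<Rightarrow> nat) \<Rightarrow> nat \<Rightarrow> nat \<Rightarrow> real^'d \<Rightarrow> nat set \<Rightarrow> (nat \<Rightarrow> real^'d) \<Rightarrow> bool" where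
  "ksparse_rep b m n k y L s \<longleftrightarrow> L \<subseteq> {..<n} \<and> card L \<le> k \<and>
     (\<forall>i\<in>L. s i \<in> subsp b m i \<and> s i \<noteq> 0) \<and> y = (\<Sum>i\<in>L. s i)"

definition unique_ksparse :: "(nat \<Rightarrow> nat \<Rightarrow> real^'d) \<Rightarrow> (nat \<Rightarrow> nat) \<Rightarrow> nat \<Rightarrow> nat \<Rightarrow> bool" where
  "unique_ksparse b m n k \<longleftrightarrow> (\<forall>y L s L' s'. ksparse_rep b m n k y L s \<and> ksparse_rep b m n k y L' s'
      \<longrightarrow> L = L' \<and> (\<forall>i\<in>L. s i = s' i))"

definition opt_lq_l1 :: "(nat \<Rightarrow> nat \<Rightarrow> real^'d) \<Rightarrow> (nat \<Rightarrow> nat) \<Rightarrow> nat \<Rightarrow> real \<Rightarrow> real^'d \<Rightarrow> (nat \<Rightarrow> nat \<Rightarrow> real) \<Rightarrow> bool" where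
  "opt_lq_l1 b m n q y c \<longleftrightarrow> y = dict_synth b m n c \<and>
     (\<forall>c'. y = dict_synth b m n c' \<longrightarrow>
        (\<Sum>i<n. lq_norm q (blockvec b m i (c i))) \<le> (\<Sum>i<n. lq_norm q (blockvec b m i (c' i))))"

end

theory Submission imports Defs begin

lemma lq_comp_le:
  fixes x :: "real^'d" assumes q: "q \<ge> 1"
  shows "\<bar>x $ k\<bar> \<le> lq_norm q x"
proof -
  have "\<bar>x $ k\<bar> = (\<bar>x $ k\<bar> powr q) powr (1/q)" using q by (simp add: powr_powr)
  also have "\<dots> \<le> (\<Sum>k\<in>UNIV. \<bar>x $ k\<bar> powr q) powr (1 / q)"
    by (rule powr_mono2) (use q in \<open>auto intro!: member_le_sum\<close>)
  finally show ?thesis by (simp add: lq_norm_def)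
qed

lemma lq_nonneg: "lq_norm q x \<ge> 0" by (simp add: lq_norm_def)

lemma lq_zero_iff:
  fixes x :: "real^'d" assumes q: "q \<ge> 1"
  shows "lq_norm q x = 0 \<longleftrightarrow> x = 0"
proof
  assume h: "lq_norm q x = 0"
  show "x = 0"
  proof (rule ccontr)
    assume "x \<noteq> 0"
    then obtain k where "x $ k \<noteq> 0" by (auto simp: vec_eq_iff)
    with lq_comp_le[OF q, of x k] h show False by simp
  qed
qed (simp add: lq_norm_def)

lemma lq_scale:
  fixes x :: "real^'d" assumes q: "q \<ge> 1"
  shows "lq_norm q (c *\<^sub>R x) = \<bar>c\<bar> * lq_norm q x"
proof -
  have "(\<Sum>k\<in>UNIV. \<bar>(c *\<^sub>R x) $ k\<bar> powr q) = \<bar>c\<bar> powr q * (\<Sum>k\<in>UNIV. \<bar>x $ k\<bar> powr q)"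
    by (simp add: abs_mult powr_mult sum_distrib_left)
  hence "lq_norm q (c *\<^sub>R x) = (\<bar>c\<bar> powr q) powr (1/q) * lq_norm q x"
    by (simp add: lq_norm_def powr_mult)
  also have "(\<bar>c\<bar> powr q) powr (1/q) = \<bar>c\<bar>" using q by (simp add: powr_powr)
  finally show ?thesis .
qed

lemma lq_pow:
  fixes x :: "real^'d" assumes q: "q \<ge> 1"
  shows "lq_norm q x powr q = (\<Sum>k\<in>UNIV. \<bar>x $ k\<bar> powr q)"
  using q by (simp add: lq_norm_def powr_powr sum_nonneg)

lemma scalar_convex:
  fixes a b t q :: real
  assumes q: "q \<ge> 1" and a: "a \<ge> 0" and b: "b \<ge> 0" and t: "0 \<le> t" "t \<le> 1"
  shows "((1-t)*a + t*b) powr q \<le> (1-t) * a powr q + t * b powr q"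
proof -
  have tq: "s powr q \<le> s" if "0 \<le> s" "s \<le> 1" for s :: real
  proof (cases "s = 0")
    case False
    then have "s powr q = s * s powr (q - 1)" using that by (simp add: powr_diff)
    also have "\<dots> \<le> s * 1" using that q by (intro mult_left_mono powr_le1) auto
    finally show ?thesis by simp
  qed simp
  consider "a = 0" | "b = 0" | "a > 0" "b > 0" using a b by linarith
  then show ?thesis
  proof cases
    case 1
    have "(t*b) powr q = t powr q * b powr q" by (simp add: powr_mult)
    also have "\<dots> \<le> t * b powr q" using tq[of t] t by (intro mult_right_mono) auto
    finally show ?thesis using 1 by simp
  next
    case 2
    have "((1-t)*a) powr q = (1-t) powr q * a powr q" by (simp add: powr_mult)
    also have "\<dots> \<le> (1-t) * a powr q" using tq[of "1-t"] t by (intro mult_right_mono) auto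
    finally show ?thesis using 2 by simp
  next
    case 3
    have "convex_on {0<..} (\<lambda>x::real. x powr q)" by (rule powr_convex[OF q])
    from convex_onD[OF this, of t a b] 3 t show ?thesis by (simp add: algebra_simps)
  qed
qed

lemma P_convex:
  fixes x y :: "real^'d" assumes q: "q \<ge> 1" and t: "0 \<le> t" "t \<le> 1"
  shows "(\<Sum>k\<in>UNIV. \<bar>((1-t) *\<^sub>R x + t *\<^sub>R y) $ k\<bar> powr q)
     \<le> (1-t) * (\<Sum>k\<in>UNIV. \<bar>x $ k\<bar> powr q) + t * (\<Sum>k\<in>UNIV. \<bar>y $ k\<bar> powr q)"
proof -
  have "\<bar>((1-t) *\<^sub>R x + t *\<^sub>R y) $ k\<bar> powr q \<le> (1-t) * \<bar>x $ k\<bar> powr q + t * \<bar>y $ k\<bar> powr q" for k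
  proof -
    have "\<bar>((1-t) *\<^sub>R x + t *\<^sub>R y) $ k\<bar> \<le> (1-t) * \<bar>x $ k\<bar> + t * \<bar>y $ k\<bar>"
    proof -
      have "\<bar>(1-t) * x $ k + t * y $ k\<bar> \<le> \<bar>(1-t) * x $ k\<bar> + \<bar>t * y $ k\<bar>" by (rule abs_triangle_ineq)
      also have "\<dots> = (1-t) * \<bar>x $ k\<bar> + t * \<bar>y $ k\<bar>" using t by (simp add: abs_mult)
      finally show ?thesis by simp
    qed
    hence "\<bar>((1-t) *\<^sub>R x + t *\<^sub>R y) $ k\<bar> powr q \<le> ((1-t) * \<bar>x $ k\<bar> + t * \<bar>y $ k\<bar>) powr q"
      using q by (intro powr_mono2) auto
    also have "\<dots> \<le> (1-t) * \<bar>x $ k\<bar> powr q + t * \<bar>y $ k\<bar> powr q"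
      by (rule scalar_convex) (use q t in auto)
    finally show ?thesis .
  qed
  hence "(\<Sum>k\<in>UNIV. \<bar>((1-t) *\<^sub>R x + t *\<^sub>R y) $ k\<bar> powr q)
     \<le> (\<Sum>k\<in>UNIV. (1-t) * \<bar>x $ k\<bar> powr q + t * \<bar>y $ k\<bar> powr q)" by (rule sum_mono)
  also have "\<dots> = (1-t) * (\<Sum>k\<in>UNIV. \<bar>x $ k\<bar> powr q) + t * (\<Sum>k\<in>UNIV. \<bar>y $ k\<bar> powr q)"
    by (simp add: sum.distrib sum_distrib_left)
  finally show ?thesis .
qed

lemma lq_triangle:
  fixes x y :: "real^'d" assumes q: "q \<ge> 1"
  shows "lq_norm q (x + y) \<le> lq_norm q x + lq_norm q y"
proof -
  define a where "a = lq_norm q x"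
  define b where "b = lq_norm q y"
  consider "x = 0" | "y = 0" | "a > 0" "b > 0"
    using lq_zero_iff[OF q] lq_nonneg a_def b_def by (metis less_eq_real_def)
  then show ?thesis
  proof cases
    case 1 then show ?thesis using lq_zero_iff[OF q, of y] lq_nonneg by (simp add: lq_norm_def)
  next
    case 2 then show ?thesis using lq_nonneg by (simp add: lq_norm_def)
  next
    case 3
    define t where "t = b / (a + b)"
    have t01: "0 \<le> t" "t \<le> 1" using 3 by (auto simp: t_def)
    define u where "u = (1/a) *\<^sub>R x"
    define v where "v = (1/b) *\<^sub>R y"
    have Nu: "lq_norm q u = 1" using 3 by (simp add: u_def lq_scale[OF q] a_def)
    have Nv: "lq_norm q v = 1" using 3 by (simp add: v_def lq_scale[OF q] b_def)
    have Pu: "(\<Sum>k\<in>UNIV. \<bar>u $ k\<bar> powr q) = 1" using lq_pow[OF q, of u] Nu by simp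
    have Pv: "(\<Sum>k\<in>UNIV. \<bar>v $ k\<bar> powr q) = 1" using lq_pow[OF q, of v] Nv by simp
    have eq: "(1-t) *\<^sub>R u + t *\<^sub>R v = (1/(a+b)) *\<^sub>R (x + y)"
      using 3 by (simp add: t_def u_def v_def scaleR_add_right field_simps)
    have "(\<Sum>k\<in>UNIV. \<bar>((1/(a+b)) *\<^sub>R (x + y)) $ k\<bar> powr q) \<le> 1"
      using P_convex[OF q t01, of u v] Pu Pv unfolding eq by simp
    hence "lq_norm q ((1/(a+b)) *\<^sub>R (x + y)) \<le> 1 powr (1/q)"
      unfolding lq_norm_def using q by (intro powr_mono2) (auto intro: sum_nonneg)
    hence "lq_norm q (x + y) / (a + b) \<le> 1" using 3 by (simp add: lq_scale[OF q])
    thus ?thesis using 3 by (simp add: a_def b_def field_simps)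
  qed
qed


lemma subsp_range:
  "subsp b m i = range (blockvec b m i)"
proof
  show "range (blockvec b m i) \<subseteq> subsp b m i"
  proof safe
    fix c show "blockvec b m i c \<in> subsp b m i"
      unfolding subsp_def blockvec_def by (rule span_sum, rule span_scale, rule span_base) auto
  qed
  have sub: "subspace (range (blockvec b m i))"
    unfolding subspace_def
  proof (intro conjI ballI allI)
    show "0 \<in> range (blockvec b m i)"
      by (rule range_eqI[of _ _ "\<lambda>_. 0"]) (simp add: blockvec_def)
  next
    fix x y assume "x \<in> range (blockvec b m i)" "y \<in> range (blockvec b m i)"
    then obtain c d where "x = blockvec b m i c" "y = blockvec b m i d" by auto
    then show "x + y \<in> range (blockvec b m i)"
      by (intro range_eqI[of _ _ "\<lambda>j. c j + d j"]) (simp add: blockvec_def sum.distrib scaleR_add_left)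
  next
    fix r x assume "x \<in> range (blockvec b m i)"
    then obtain c where "x = blockvec b m i c" by auto
    then show "r *\<^sub>R x \<in> range (blockvec b m i)"
      by (intro range_eqI[of _ _ "\<lambda>j. r * c j"]) (simp add: blockvec_def scaleR_sum_right)
  qed
  have "b i ` {..<m i} \<subseteq> range (blockvec b m i)"
  proof
    fix v assume "v \<in> b i ` {..<m i}"
    then obtain j where j: "j < m i" "v = b i j" by auto
    have "blockvec b m i (\<lambda>l. if l = j then 1 else 0) = (\<Sum>l\<in>{..<m i}. if l = j then b i l else 0)"
      unfolding blockvec_def by (rule sum.cong) auto
    also have "\<dots> = b i j" using j by (simp add: sum.delta)
    finally have "blockvec b m i (\<lambda>l. if l = j then 1 else 0) = b i j" .
    then show "v \<in> range (blockvec b m i)" using j by (metis rangeI)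
  qed
  from span_minimal[OF this sub] show "subsp b m i \<subseteq> range (blockvec b m i)"
    by (simp add: subsp_def)
qed

lemma coh_bound:
  assumes "x \<in> S" "z \<in> T"
  shows "\<bar>x \<bullet> z\<bar> \<le> sub_coh S T * norm x * norm z"
proof (cases "x = 0 \<or> z = 0")
  case True then show ?thesis by auto
next
  case False
  let ?X = "{\<bar>x \<bullet> z\<bar> / (norm x * norm z) | x z. x \<in> S \<and> x \<noteq> 0 \<and> z \<in> T \<and> z \<noteq> 0} \<union> {0}"
  have bdd: "bdd_above ?X"
  proof (rule bdd_aboveI[of _ 1])
    fix r assume "r \<in> ?X"
    then show "r \<le> 1"
    proof (elim UnE)
      assume "r \<in> {\<bar>x \<bullet> z\<bar> / (norm x * norm z) | x z. x \<in> S \<and> x \<noteq> 0 \<and> z \<in> T \<and> z \<noteq> 0}"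
      then obtain x z where h: "r = \<bar>x \<bullet> z\<bar> / (norm x * norm z)" "x \<noteq> 0" "z \<noteq> 0" "x \<in> S" "z \<in> T" by blast
      then have "norm x * norm z > 0" by simp
      then show ?thesis using h Cauchy_Schwarz_ineq2[of x z] by (simp add: pos_divide_le_eq)
    qed simp
  qed
  have "\<bar>x \<bullet> z\<bar> / (norm x * norm z) \<le> Sup ?X"
    by (rule cSup_upper[OF _ bdd]) (use assms False in blast)
  moreover have pos: "norm x * norm z > 0" using False by simp
  ultimately have "\<bar>x \<bullet> z\<bar> \<le> Sup ?X * (norm x * norm z)" by (simp add: pos_divide_le_eq)
  then show ?thesis by (simp add: sub_coh_def mult.assoc)
qed

lemma coh_nonneg: "sub_coh S T \<ge> 0"
proof -
  let ?X = "{\<bar>x \<bullet> z\<bar> / (norm x * norm z) | x z. x \<in> S \<and> x \<noteq> 0 \<and> z \<in> T \<and> z \<noteq> 0} \<union> {0}"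
  have bdd: "bdd_above ?X"
  proof (rule bdd_aboveI[of _ 1])
    fix r assume "r \<in> ?X"
    then show "r \<le> 1"
    proof (elim UnE)
      assume "r \<in> {\<bar>x \<bullet> z\<bar> / (norm x * norm z) | x z. x \<in> S \<and> x \<noteq> 0 \<and> z \<in> T \<and> z \<noteq> 0}"
      then obtain x z where h: "r = \<bar>x \<bullet> z\<bar> / (norm x * norm z)" "x \<noteq> 0" "z \<noteq> 0" "x \<in> S" "z \<in> T" by blast
      then have "norm x * norm z > 0" by simp
      then show ?thesis using h Cauchy_Schwarz_ineq2[of x z] by (simp add: pos_divide_le_eq)
    qed simp
  qed
  show ?thesis unfolding sub_coh_def by (rule cSup_upper[OF _ bdd]) simp
qed

lemma zeta_ge:
  assumes "0 < K" "L \<subseteq> {..<n}" "card L = K" "i < n" "i \<notin> L"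
  shows "(\<Sum>j\<in>L. sub_coh (subsp b m i) (subsp b m j)) \<le> zeta b m n K"
proof -
  let ?Z = "{(\<Sum>j\<in>L. sub_coh (subsp b m i) (subsp b m j)) | L i.
            L \<subseteq> {..<n} \<and> card L = K \<and> i < n \<and> i \<notin> L}"
  have "?Z \<subseteq> (\<lambda>(L, i). \<Sum>j\<in>L. sub_coh (subsp b m i) (subsp b m j)) ` (Pow {..<n} \<times> {..<n})"
    by auto
  hence fin: "finite ?Z" by (rule finite_subset) auto
  have "(\<Sum>j\<in>L. sub_coh (subsp b m i) (subsp b m j)) \<le> Max ?Z"
    by (rule Max_ge[OF fin]) (use assms in blast)
  thus ?thesis using assms by (simp add: zeta_def)
qed

lemma zeta_nonneg:
  assumes "K < n" shows "zeta b m n K \<ge> 0"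
proof (cases "K = 0")
  case True then show ?thesis by (simp add: zeta_def)
next
  case False
  have "0 \<le> (\<Sum>j\<in>{..<K}. sub_coh (subsp b m K) (subsp b m j))"
    by (intro sum_nonneg coh_nonneg)
  also have "\<dots> \<le> zeta b m n K" using assms False by (intro zeta_ge) auto
  finally show ?thesis .
qed


lemma sum_minus_single:
  assumes "finite A"
  shows "sum g (A - {i}) = (\<Sum>j\<in>A. if j \<noteq> i then g j else 0)"
proof -
  have "{x\<in>A. x \<noteq> i} = A - {i}" by auto
  with sum.inter_filter[OF assms, of g "\<lambda>j. j \<noteq> i"] show ?thesis by simp
qed

lemma eps_bounds:
  fixes b :: "nat \<Rightarrow> nat \<Rightarrow> real^'d"
  assumes q: "q \<ge> 1" and i: "i < n" and x: "x \<in> subsp b m i"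
  shows "(1 - eps_q b m n q) * (lq_norm q x)\<^sup>2 \<le> (norm x)\<^sup>2 \<and>
         (norm x)\<^sup>2 \<le> (1 + eps_q b m n q) * (lq_norm q x)\<^sup>2"
proof -
  define E where "E = {e. \<forall>i<n. \<forall>ci.
      (1 - e) * (lq_norm q (blockvec b m i ci))\<^sup>2 \<le> (norm (blockvec b m i ci))\<^sup>2 \<and>
      (norm (blockvec b m i ci))\<^sup>2 \<le> (1 + e) * (lq_norm q (blockvec b m i ci))\<^sup>2}"
  have epsE: "eps_q b m n q = Inf E" by (simp add: E_def eps_q_def)
  define D where "D = real CARD('d)"
  have D1: "D \<ge> 1" by (simp add: D_def)
  have nD: "norm v \<le> D * lq_norm q v" for v :: "real^'d"
  proof -
    have "norm v \<le> (\<Sum>k\<in>UNIV. \<bar>v $ k\<bar>)" by (rule norm_le_l1_cart)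
    also have "\<dots> \<le> (\<Sum>k\<in>(UNIV::'d set). lq_norm q v)" by (rule sum_mono) (rule lq_comp_le[OF q])
    finally show ?thesis by (simp add: D_def)
  qed
  have "D^2 \<in> E"
    unfolding E_def
  proof (intro CollectI allI impI conjI)
    fix i ci
    let ?v = "blockvec b m i ci"
    have "(1 - D^2) * (lq_norm q ?v)\<^sup>2 \<le> 0"
      using D1 by (intro mult_nonpos_nonneg) (auto simp: power_one_right)
    also have "0 \<le> (norm ?v)\<^sup>2" by simp
    finally show "(1 - D^2) * (lq_norm q ?v)\<^sup>2 \<le> (norm ?v)\<^sup>2" .
    have "(norm ?v)\<^sup>2 \<le> (D * lq_norm q ?v)\<^sup>2"
      using nD[of ?v] by (intro power_mono) auto
    also have "\<dots> \<le> (1 + D^2) * (lq_norm q ?v)\<^sup>2" unfolding power_mult_distrib by (intro mult_right_mono) auto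
    finally show "(norm ?v)\<^sup>2 \<le> (1 + D^2) * (lq_norm q ?v)\<^sup>2" .
  qed
  hence Ene: "E \<noteq> {}" by auto
  from x obtain ci where xc: "x = blockvec b m i ci" by (auto simp: subsp_range)
  show ?thesis
  proof (cases "x = 0")
    case True then show ?thesis by (simp add: lq_norm_def)
  next
    case False
    have Npos: "(lq_norm q x)\<^sup>2 > 0" using False lq_zero_iff[OF q, of x] lq_nonneg[of q x] by simp
    have "1 - (norm x)\<^sup>2 / (lq_norm q x)\<^sup>2 \<le> Inf E"
    proof (rule cInf_greatest[OF Ene])
      fix e assume "e \<in> E"
      then have "(1 - e) * (lq_norm q x)\<^sup>2 \<le> (norm x)\<^sup>2" using i unfolding E_def xc by blast
      then show "1 - (norm x)\<^sup>2 / (lq_norm q x)\<^sup>2 \<le> e" using Npos by (simp add: field_simps)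
    qed
    hence 1: "(1 - eps_q b m n q) * (lq_norm q x)\<^sup>2 \<le> (norm x)\<^sup>2" using Npos by (simp add: epsE field_simps)
    have "(norm x)\<^sup>2 / (lq_norm q x)\<^sup>2 - 1 \<le> Inf E"
    proof (rule cInf_greatest[OF Ene])
      fix e assume "e \<in> E"
      then have "(norm x)\<^sup>2 \<le> (1 + e) * (lq_norm q x)\<^sup>2" using i unfolding E_def xc by blast
      then show "(norm x)\<^sup>2 / (lq_norm q x)\<^sup>2 - 1 \<le> e" using Npos by (simp add: field_simps)
    qed
    hence 2: "(norm x)\<^sup>2 \<le> (1 + eps_q b m n q) * (lq_norm q x)\<^sup>2" using Npos by (simp add: epsE field_simps)
    from 1 2 show ?thesis by simp
  qed
qed

lemma norm_bounds:
  fixes b :: "nat \<Rightarrow> nat \<Rightarrow> real^'d"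
  assumes q: "q \<ge> 1" and i: "i < n" and x: "x \<in> subsp b m i"
  shows "sqrt (1 - eps_q b m n q) * lq_norm q x \<le> norm x \<and>
         norm x \<le> sqrt (1 + eps_q b m n q) * lq_norm q x"
proof -
  note e = eps_bounds[OF q i x]
  have N0: "lq_norm q x \<ge> 0" by (rule lq_nonneg)
  have "sqrt ((1 - eps_q b m n q) * (lq_norm q x)\<^sup>2) \<le> sqrt ((norm x)\<^sup>2)"
    using e by (intro real_sqrt_le_mono) auto
  hence 1: "sqrt (1 - eps_q b m n q) * lq_norm q x \<le> norm x" using N0 by (simp add: real_sqrt_mult)
  have "sqrt ((norm x)\<^sup>2) \<le> sqrt ((1 + eps_q b m n q) * (lq_norm q x)\<^sup>2)"
    using e by (intro real_sqrt_le_mono) auto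
  hence 2: "norm x \<le> sqrt (1 + eps_q b m n q) * lq_norm q x" using N0 by (simp add: real_sqrt_mult)
  from 1 2 show ?thesis by simp
qed

lemma final_arith:
  fixes e z z' a b A B :: real
  assumes e0: "0 \<le> e" and z0: "0 \<le> z" and z'0: "0 \<le> z'"
    and cond: "z + z' < (1 - e) / (1 + e)"
    and i1: "a \<le> z' * a + z * b"
    and i2: "sqrt (1 - e) * A \<le> a" and i3: "b \<le> sqrt (1 + e) * B" and i4: "B \<le> A"
    and A0: "A > 0"
  shows False
proof -
  have e1: "e < 1"
  proof (rule ccontr)
    assume "\<not> e < 1"
    then have "(1 - e) / (1 + e) \<le> 0" using e0 by (intro divide_nonpos_pos) auto
    with cond z0 z'0 show False by linarith
  qed
  define r where "r = (1 - e) / (1 + e)"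
  have r1: "r \<le> 1" using e0 by (simp add: r_def divide_le_eq_1)
  define s1 where "s1 = sqrt (1 - e)"
  define s2 where "s2 = sqrt (1 + e)"
  have s2p: "s2 > 0" using e0 by (simp add: s2_def)
  have s1n: "s1 \<ge> 0" using e1 by (simp add: s1_def)
  have s12: "s1 \<le> s2" using e0 by (simp add: s1_def s2_def)
  define t where "t = s1 / s2"
  have t0: "t \<ge> 0" "t \<le> 1" using s2p s1n s12 by (auto simp: t_def)
  have tt: "t * t = r" using e0 e1 by (simp add: t_def s1_def s2_def r_def real_sqrt_divide[symmetric] flip: real_sqrt_mult)
  have z'1: "1 - z' \<ge> 0" using cond z0 r1 by (simp add: r_def)
  have "(1 - z') * a \<le> z * b" using i1 by (simp add: algebra_simps)
  also have "\<dots> \<le> z * (s2 * A)" using i3 i4 z0 s2p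
    by (intro mult_left_mono) (auto simp: s2_def intro: order_trans mult_left_mono)
  finally have "(1 - z') * (s1 * A) \<le> z * (s2 * A)"
    using i2 z'1 unfolding s1_def by (meson mult_left_mono order_trans)
  hence "((1 - z') * s1) * A \<le> (z * s2) * A" by (simp add: algebra_simps)
  hence "(1 - z') * s1 \<le> z * s2" using A0 by simp
  hence "(1 - z') * t \<le> z" using s2p by (simp add: t_def field_simps)
  moreover have "(t + z') * (1 - t) \<ge> 0" using t0 z'0 by simp
  ultimately have "r \<le> z + z'" using tt by (simp add: algebra_simps)
  with cond show False by (simp add: r_def)
qed


theorem proposition4:
  fixes b :: "nat \<Rightarrow> nat \<Rightarrow> real^'d" and m :: "nat \<Rightarrow> nat" and n k :: nat and q :: real
  assumes q: "q \<ge> 1"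
    and k: "0 < k" "k < n"
    and blocks_nonempty: "\<forall>i<n. 0 < m i"
    and unit_cols: "\<forall>i<n. \<forall>j<m i. norm (b i j) = 1"
    and disjoint: "\<forall>i<n. \<forall>j<n. i \<noteq> j \<longrightarrow> subsp b m i \<inter> subsp b m j = {0}"
    and uniq: "unique_ksparse b m n k"
    and cond: "zeta b m n k + zeta b m n (k - 1) < (1 - eps_q b m n q) / (1 + eps_q b m n q)"
  shows "\<forall>L y c. L \<subseteq> {..<n} \<and> card L = k \<and>
            y \<in> {(\<Sum>i\<in>L. s i) | s. \<forall>i\<in>L. s i \<in> subsp b m i} \<and>
            opt_lq_l1 b m n q y c
          \<longrightarrow> (\<forall>i<n. i \<notin> L \<longrightarrow> blockvec b m i (c i) = 0)"
proof (rule allI, rule allI, rule allI, rule impI)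
  fix L y c
  assume H: "L \<subseteq> {..<n} \<and> card L = k \<and>
            y \<in> {(\<Sum>i\<in>L. s i) | s. \<forall>i\<in>L. s i \<in> subsp b m i} \<and> opt_lq_l1 b m n q y c"
  hence Lsub: "L \<subseteq> {..<n}" and cardL: "card L = k" and opt: "opt_lq_l1 b m n q y c" by auto
  from H obtain s where s: "\<forall>i\<in>L. s i \<in> subsp b m i" and ys: "y = (\<Sum>i\<in>L. s i)" by auto
  have finL: "finite L" using Lsub finite_subset by blast
  define eps where "eps = eps_q b m n q"
  define Z where "Z = zeta b m n k"
  define Z' where "Z' = zeta b m n (k - 1)"
  define z where "z i = blockvec b m i (c i)" for i
  define sL where "sL i = (if i \<in> L then s i else 0)" for i
  define h where "h i = z i - sL i" for i
  define Lc where "Lc = {..<n} - L"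
  have zS: "z i \<in> subsp b m i" for i by (simp add: z_def subsp_range)
  have sLS: "sL i \<in> subsp b m i" for i using s by (simp add: sL_def subsp_def span_zero)
  have hS: "h i \<in> subsp b m i" for i unfolding h_def subsp_def
    using zS sLS unfolding subsp_def by (rule span_diff)
  have yz: "y = (\<Sum>i<n. z i)" using opt by (simp add: opt_lq_l1_def dict_synth_def z_def)
  have ysL: "(\<Sum>i<n. sL i) = y"
  proof -
    have "(\<Sum>i<n. sL i) = sum s ({..<n} \<inter> L)" unfolding sL_def by (rule sum.inter_restrict[symmetric]) simp
    also have "{..<n} \<inter> L = L" using Lsub by auto
    finally show ?thesis using ys by simp
  qed
  have hsum: "(\<Sum>i<n. h i) = 0" unfolding h_def using yz ysL by (simp add: sum_subtractf)
  have "\<forall>i. \<exists>ci. blockvec b m i ci = sL i" using sLS by (metis subsp_range rangeE)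
  from choice[OF this] obtain c' where c': "\<And>i. blockvec b m i (c' i) = sL i" by blast
  have yc': "y = dict_synth b m n c'" using ysL by (simp add: dict_synth_def c')
  have "(\<Sum>i<n. lq_norm q (blockvec b m i (c i))) \<le> (\<Sum>i<n. lq_norm q (blockvec b m i (c' i)))"
    using opt yc' unfolding opt_lq_l1_def by blast
  hence optI: "(\<Sum>i<n. lq_norm q (z i)) \<le> (\<Sum>i<n. lq_norm q (sL i))"
    by (simp add: z_def c')
  have split: "sum g {..<n} = sum g Lc + sum g L" for g :: "nat \<Rightarrow> real"
    unfolding Lc_def using Lsub by (intro sum.subset_diff) auto
  define A where "A = (\<Sum>i\<in>L. lq_norm q (h i))"
  define Bq where "Bq = (\<Sum>i\<in>Lc. lq_norm q (h i))"
  have BA: "Bq \<le> A"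
  proof -
    have 1: "(\<Sum>i<n. lq_norm q (z i)) = Bq + (\<Sum>i\<in>L. lq_norm q (z i))"
      unfolding split Bq_def by (simp add: Lc_def h_def sL_def)
    have "(\<Sum>i<n. lq_norm q (sL i)) = (\<Sum>i\<in>Lc. lq_norm q (sL i)) + (\<Sum>i\<in>L. lq_norm q (s i))"
      unfolding split by (simp add: sL_def)
    also have "(\<Sum>i\<in>Lc. lq_norm q (sL i)) = 0" by (simp add: Lc_def sL_def lq_norm_def)
    also have "(\<Sum>i\<in>L. lq_norm q (s i)) \<le> (\<Sum>i\<in>L. lq_norm q (z i) + lq_norm q (h i))"
    proof (rule sum_mono)
      fix i assume "i \<in> L"
      then have "s i = z i + (-1) *\<^sub>R h i" by (simp add: h_def sL_def)
      then have "lq_norm q (s i) \<le> lq_norm q (z i) + lq_norm q ((-1) *\<^sub>R h i)"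
        using lq_triangle[OF q] by metis
      then show "lq_norm q (s i) \<le> lq_norm q (z i) + lq_norm q (h i)" using lq_scale[OF q, of "-1" "h i"] by simp
    qed
    finally have "(\<Sum>i<n. lq_norm q (sL i)) \<le> (\<Sum>i\<in>L. lq_norm q (z i)) + A"
      by (simp add: sum.distrib A_def)
    with optI 1 show ?thesis by simp
  qed
  define mu where "mu j i = sub_coh (subsp b m j) (subsp b m i)" for j i
  have coh: "norm (h i) \<le> (\<Sum>j\<in>{..<n} - {i}. mu j i * norm (h j))" if i: "i < n" for i
  proof -
    have "(\<Sum>j<n. h j) = h i + (\<Sum>j\<in>{..<n} - {i}. h j)"
      using i by (intro sum.remove) auto
    hence hi: "h i = - (\<Sum>j\<in>{..<n} - {i}. h j)" using hsum by (simp add: eq_neg_iff_add_eq_0)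
    have "(norm (h i))\<^sup>2 = h i \<bullet> h i" by (simp add: power2_norm_eq_inner)
    also have "\<dots> = - (\<Sum>j\<in>{..<n} - {i}. h j \<bullet> h i)"
      by (subst (1) hi) (simp add: inner_sum_left)
    also have "\<dots> \<le> (\<Sum>j\<in>{..<n} - {i}. \<bar>h j \<bullet> h i\<bar>)"
      by (simp add: sum_negf[symmetric] sum_mono)
    also have "\<dots> \<le> (\<Sum>j\<in>{..<n} - {i}. mu j i * norm (h j) * norm (h i))"
      by (rule sum_mono) (simp add: mu_def coh_bound hS)
    also have "\<dots> = (\<Sum>j\<in>{..<n} - {i}. mu j i * norm (h j)) * norm (h i)"
      by (simp add: sum_distrib_right)
    finally have *: "norm (h i) * norm (h i) \<le> (\<Sum>j\<in>{..<n} - {i}. mu j i * norm (h j)) * norm (h i)"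
      by (simp add: power2_eq_square)
    have R0: "0 \<le> (\<Sum>j\<in>{..<n} - {i}. mu j i * norm (h j))"
      by (intro sum_nonneg mult_nonneg_nonneg) (auto simp: mu_def coh_nonneg)
    show ?thesis
    proof (cases "norm (h i) = 0")
      case True then show ?thesis using R0 by simp
    next
      case False
      then have "norm (h i) > 0" by simp
      with * show ?thesis by simp
    qed
  qed
  define a where "a = (\<Sum>i\<in>L. norm (h i))"
  define bb where "bb = (\<Sum>i\<in>Lc. norm (h i))"
  define w where "w j = (\<Sum>i\<in>L - {j}. mu j i)" for j
  have "a \<le> (\<Sum>i\<in>L. \<Sum>j\<in>{..<n} - {i}. mu j i * norm (h j))"
    unfolding a_def using Lsub by (intro sum_mono coh) auto
  also have "\<dots> = (\<Sum>i\<in>L. \<Sum>j<n. if j \<noteq> i then mu j i * norm (h j) else 0)"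
    by (simp add: sum_minus_single)
  also have "\<dots> = (\<Sum>j<n. \<Sum>i\<in>L. if j \<noteq> i then mu j i * norm (h j) else 0)"
    by (rule sum.swap)
  also have "\<dots> = (\<Sum>j<n. norm (h j) * w j)"
  proof (rule sum.cong[OF refl])
    fix j
    have "(\<Sum>i\<in>L. if j \<noteq> i then mu j i * norm (h j) else 0) = (\<Sum>i\<in>L - {j}. mu j i * norm (h j))"
      using sum_minus_single[OF finL, of "\<lambda>i. mu j i * norm (h j)" j] by (simp add: eq_commute)
    also have "\<dots> = norm (h j) * w j" by (simp add: w_def sum_distrib_left mult.commute)
    finally show "(\<Sum>i\<in>L. if j \<noteq> i then mu j i * norm (h j) else 0) = norm (h j) * w j" .
  qed
  also have "\<dots> = (\<Sum>j\<in>Lc. norm (h j) * w j) + (\<Sum>j\<in>L. norm (h j) * w j)" by (rule split)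
  also have "\<dots> \<le> (\<Sum>j\<in>Lc. norm (h j) * Z) + (\<Sum>j\<in>L. norm (h j) * Z')"
  proof (rule add_mono; rule sum_mono; rule mult_left_mono)
    fix j assume j: "j \<in> Lc"
    then have "L - {j} = L" "j < n" "j \<notin> L" by (auto simp: Lc_def)
    then show "w j \<le> Z" unfolding w_def Z_def mu_def
      using zeta_ge[of k L n j b m] k Lsub cardL by simp
  next
    fix j assume j: "j \<in> L"
    show "w j \<le> Z'"
    proof (cases "k - 1 = 0")
      case True
      then have "card (L - {j}) = 0" using j cardL finL by simp
      then have e: "L - {j} = {}" using finL by simp
      have "w j = 0" unfolding w_def e by simp
      moreover have "Z' = 0" using True by (simp add: Z'_def zeta_def)
      ultimately show ?thesis by simp
    next
      case False
      have "card (L - {j}) = k - 1" using j cardL finL by simp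
      moreover have "j < n" using j Lsub by auto
      ultimately show ?thesis unfolding w_def Z'_def mu_def
        using zeta_ge[of "k - 1" "L - {j}" n j b m] False Lsub by auto
    qed
  qed auto
  finally have ineq1: "a \<le> Z' * a + Z * bb"
    by (simp add: a_def bb_def sum_distrib_left sum_distrib_right mult.commute)
  have i2: "sqrt (1 - eps) * A \<le> a"
    unfolding A_def a_def sum_distrib_left eps_def
    using Lsub by (intro sum_mono) (use norm_bounds[OF q _ hS] in auto)
  have i3: "bb \<le> sqrt (1 + eps) * Bq"
    unfolding Bq_def bb_def sum_distrib_left eps_def
    by (intro sum_mono) (use norm_bounds[OF q _ hS] in \<open>auto simp: Lc_def\<close>)
  have eps0: "eps \<ge> 0"
  proof -
    have m0: "0 < m 0" and n0: "0 < n" using blocks_nonempty k by auto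
    let ?v = "b 0 0"
    have vS: "?v \<in> subsp b m 0" unfolding subsp_def using m0 by (intro span_base) auto
    have nv: "norm ?v = 1" using unit_cols m0 n0 by auto
    hence "?v \<noteq> 0" by auto
    hence Np: "(lq_norm q ?v)\<^sup>2 > 0" using lq_zero_iff[OF q, of ?v] lq_nonneg[of q ?v] by simp
    from eps_bounds[OF q n0 vS] have "(1 - eps) * (lq_norm q ?v)\<^sup>2 \<le> (1 + eps) * (lq_norm q ?v)\<^sup>2"
      by (simp add: eps_def)
    with Np have "1 - eps \<le> 1 + eps" by simp
    thus ?thesis by simp
  qed
  have Z0: "Z \<ge> 0" unfolding Z_def using k by (intro zeta_nonneg) auto
  have Z'0: "Z' \<ge> 0" unfolding Z'_def using k by (intro zeta_nonneg) auto
  have A0: "A \<ge> 0" unfolding A_def by (intro sum_nonneg lq_nonneg)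
  have "\<not> A > 0"
  proof
    assume "A > 0"
    from final_arith[OF eps0 Z0 Z'0 _ ineq1 i2 i3 BA this] cond show False
      by (simp add: Z_def Z'_def eps_def)
  qed
  with A0 have "A = 0" by simp
  with BA have "Bq \<le> 0" by simp
  moreover have "Bq \<ge> 0" unfolding Bq_def by (intro sum_nonneg lq_nonneg)
  ultimately have "Bq = 0" by simp
  hence "\<forall>j\<in>Lc. lq_norm q (h j) = 0" unfolding Bq_def
    by (subst (asm) sum_nonneg_eq_0_iff) (auto simp: Lc_def lq_nonneg)
  hence "\<forall>j\<in>Lc. h j = 0" using lq_zero_iff[OF q] by blast
  thus "\<forall>i<n. i \<notin> L \<longrightarrow> blockvec b m i (c i) = 0"
    by (auto simp: Lc_def h_def sL_def z_def)
qed

end
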